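(* Let $M,N$ be positive integers and $C_0,\dots,C_{N-1}\in\{0,1,\dots,M-1\}$. For $p\in\{0,\dots,M-1\}$, $q\in\{0,\dots,N-1\}$ let $\bm\psi_{p,q}\in\mathbb{C}^N$ have entries $[\bm\psi_{p,q}]_n=\frac{1}{\sqrt N}e^{j\frac{2\pi p}{M}C_n+j\frac{2\pi q}{N}n}$, let $\bm\Psi_q=[\bm\psi_{0,q},\dots,\bm\psi_{M-1,q}]\in\mathbb{C}^{N\times M}$ and $\bm\Psi=[\bm\Psi_0,\dots,\bm\Psi_{N-1}]\in\mathbb{C}^{N\times MN}$. Then $\bm X:=\bm\Psi^H\bm\Psi\in\mathbb{C}^{MN\times MN}$, viewed as an $N\times N$ array of $M\times M$ blocks $\bm X_{q_1,q_2}=\bm\Psi_{q_1}^H\bm\Psi_{q_2}$, is a block circulant matrix with circulant blocks; that is, each block $\bm X_{q_1,q_2}$ is circulant, and $\bm X_{q_1,q_2}=\bm X_{0,(q_2-q_1)\bmod N}$ for all $q_1,q_2\in\{0,\dots,N-1\}$.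
   Context: $j$ denotes the imaginary unit and $(\cdot)^H$ the conjugate transpose. An $M\times M$ matrix $\bm A$ is circulant if $[\bm A]_{p_1,p_2}=[\bm A]_{0,(p_2-p_1)\bmod M}$. *)

theory Defs
  imports Complex_Main
begin

text \<open>Matrices of varying size are represented as functions nat => nat => complex,
  meaningful on the stated index ranges.\<close>

definition psi :: "nat \<Rightarrow> nat \<Rightarrow> (nat \<Rightarrow> nat) \<Rightarrow> nat \<Rightarrow> nat \<Rightarrow> nat \<Rightarrow> complex" where
  "psi M N C p q n =
     complex_of_real (1 / sqrt (real N)) *
     exp (\<i> * complex_of_real (2 * pi * real p / real M) * of_nat (C n)
        + \<i> * complex_of_real (2 * pi * real q / real N) * of_nat n)"

text \<open>Psi = [Psi_0, ..., Psi_{N-1}], an N x MN matrix; column q*M + p is psi_{p,q}.\<close>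
definition Psi :: "nat \<Rightarrow> nat \<Rightarrow> (nat \<Rightarrow> nat) \<Rightarrow> nat \<Rightarrow> nat \<Rightarrow> complex" where
  "Psi M N C n k = psi M N C (k mod M) (k div M) n"

definition Xmat :: "nat \<Rightarrow> nat \<Rightarrow> (nat \<Rightarrow> nat) \<Rightarrow> nat \<Rightarrow> nat \<Rightarrow> complex" where
  "Xmat M N C k1 k2 = (\<Sum>n<N. cnj (Psi M N C n k1) * Psi M N C n k2)"

definition Xblock :: "nat \<Rightarrow> nat \<Rightarrow> (nat \<Rightarrow> nat) \<Rightarrow> nat \<Rightarrow> nat \<Rightarrow> nat \<Rightarrow> nat \<Rightarrow> complex" where
  "Xblock M N C q1 q2 p1 p2 = Xmat M N C (q1 * M + p1) (q2 * M + p2)"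

definition circulant :: "nat \<Rightarrow> (nat \<Rightarrow> nat \<Rightarrow> complex) \<Rightarrow> bool" where
  "circulant M A \<longleftrightarrow>
     (\<forall>p1<M. \<forall>p2<M. A p1 p2 = A 0 (nat ((int p2 - int p1) mod int M)))"

end

theory Submission
  imports Defs
begin

definition ex :: "nat \<Rightarrow> int \<Rightarrow> complex" where
  "ex M k = exp (2 * of_real pi * \<i> * of_int k / of_nat M)"

lemma ex_mod:
  assumes "M > 0" "a mod int M = b mod int M"
  shows "ex M a = ex M b"
proof -
  obtain t where t: "a = b + int M * t"
    using assms(2) by (metis mod_eqE mult.commute)
  have "2 * of_real pi * \<i> * of_int a / of_nat M
      = 2 * of_real pi * \<i> * of_int b / of_nat M + (2 * of_int t * of_real pi) * \<i>"
    using assms(1) by (simp add: t field_simps)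
  hence "ex M a = ex M b * exp ((2 * of_int t * of_real pi) * \<i>)"
    by (simp add: ex_def exp_add)
  also have "exp ((2 * of_int t * of_real pi) * \<i>) = 1"
  proof -
    have "exp ((2 * of_int t * of_real pi) * \<i>) = exp (of_int t * (2 * of_real pi * \<i>))"
      by (rule arg_cong[where f=exp]) (simp add: algebra_simps)
    also have "\<dots> = exp (2 * of_real pi * \<i>) powi t"
      by (simp only: exp_power_int)
    finally show ?thesis by simp
  qed
  finally show ?thesis by simp
qed

lemma term_eq:
  assumes "N > 0"
  shows "cnj (psi M N C p1 q1 n) * psi M N C p2 q2 n
     = of_real (1 / real N) * ex M ((int p2 - int p1) * int (C n)) * ex N ((int q2 - int q1) * int n)"
proof -
  have s: "complex_of_real (1 / sqrt (real N)) * complex_of_real (1 / sqrt (real N)) = of_real (1 / real N)"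
    using assms by (simp flip: of_real_mult)
  have c: "cnj (exp z) = exp (cnj z)" for z by (simp add: complex_eq_iff Re_exp Im_exp)
  have "cnj (psi M N C p1 q1 n) * psi M N C p2 q2 n
     = of_real (1 / real N) * (exp (cnj (\<i> * complex_of_real (2 * pi * real p1 / real M) * of_nat (C n)
        + \<i> * complex_of_real (2 * pi * real q1 / real N) * of_nat n)) *
        exp (\<i> * complex_of_real (2 * pi * real p2 / real M) * of_nat (C n)
        + \<i> * complex_of_real (2 * pi * real q2 / real N) * of_nat n))"
    unfolding psi_def by (simp only: complex_cnj_mult complex_cnj_complex_of_real c flip: s) (simp add: algebra_simps)
  also have "exp (cnj (\<i> * complex_of_real (2 * pi * real p1 / real M) * of_nat (C n)
        + \<i> * complex_of_real (2 * pi * real q1 / real N) * of_nat n)) *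
        exp (\<i> * complex_of_real (2 * pi * real p2 / real M) * of_nat (C n)
        + \<i> * complex_of_real (2 * pi * real q2 / real N) * of_nat n)
     = ex M ((int p2 - int p1) * int (C n)) * ex N ((int q2 - int q1) * int n)"
    unfolding ex_def by (simp add: exp_add[symmetric] algebra_simps diff_divide_distrib add_divide_distrib)
  finally show ?thesis by (simp only: mult.assoc)
qed

lemma Xblock_eq:
  assumes "N > 0" "p1 < M" "p2 < M"
  shows "Xblock M N C q1 q2 p1 p2
     = (\<Sum>n<N. of_real (1 / real N) * ex M ((int p2 - int p1) * int (C n)) * ex N ((int q2 - int q1) * int n))"
proof -
  have "Psi M N C n (q * M + p) = psi M N C p q n" if "p < M" for n q p
    using that by (simp add: Psi_def)
  thus ?thesis using assms by (simp add: Xblock_def Xmat_def term_eq)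
qed

lemma modlem:
  assumes "M > 0"
  shows "(a::int) * c mod int M = (int (nat (a mod int M)) - int 0) * c mod int M"
proof -
  have "int (nat (a mod int M)) = a mod int M" using assms by simp
  thus ?thesis by (simp add: mod_mult_left_eq)
qed

theorem lemma3:
  fixes M N :: nat and C :: "nat \<Rightarrow> nat"
  assumes "M > 0" and "N > 0" and "\<forall>n<N. C n < M"
  shows "(\<forall>q1<N. \<forall>q2<N. circulant M (Xblock M N C q1 q2)) \<and>
         (\<forall>q1<N. \<forall>q2<N. \<forall>p1<M. \<forall>p2<M.
            Xblock M N C q1 q2 p1 p2 =
            Xblock M N C 0 (nat ((int q2 - int q1) mod int N)) p1 p2)"
proof (intro conjI allI impI)
  fix q1 q2 assume q: "q1 < N" "q2 < N"
  show "circulant M (Xblock M N C q1 q2)"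
    unfolding circulant_def
  proof (intro allI impI)
    fix p1 p2 assume p: "p1 < M" "p2 < M"
    have lt: "nat ((int p2 - int p1) mod int M) < M" using assms(1) by (simp add: nat_less_iff)
    have "ex M ((int p2 - int p1) * int (C n)) = ex M ((int (nat ((int p2 - int p1) mod int M)) - int 0) * int (C n))" for n
      using assms(1) by (intro ex_mod modlem)
    then show "Xblock M N C q1 q2 p1 p2 = Xblock M N C q1 q2 0 (nat ((int p2 - int p1) mod int M))"
      using Xblock_eq[OF assms(2) p] Xblock_eq[OF assms(2) _ lt] assms(1) by simp
  qed
next
  fix q1 q2 p1 p2 assume q: "q1 < N" "q2 < N" and p: "p1 < M" "p2 < M"
  have "ex N ((int q2 - int q1) * int n) = ex N ((int (nat ((int q2 - int q1) mod int N)) - int 0) * int n)" for n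
    using assms(2) by (intro ex_mod modlem)
  then show "Xblock M N C q1 q2 p1 p2 = Xblock M N C 0 (nat ((int q2 - int q1) mod int N)) p1 p2"
    using Xblock_eq[OF assms(2) p] by simp
qed

end
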